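(* Let $\lambda\in\mathbb{R}$, let $r\ge s\ge 1$ be integers and let $n\ge 1$ be an integer. Then \[ \phi_{n,\lambda}^{(r,s)}(x)=\frac{1}{e^{x}}\sum_{k=0}^{\infty}\frac{1}{k!}\bigg(\prod_{j=1}^{n}\big[(k+(j-1)(r-s))_s-(n-j)\lambda\big]\bigg)x^{k}. \] In particular, for $x=1$, \[ \phi_{n,\lambda}^{(r,s)}=\frac{1}{e}\sum_{k=0}^{\infty}\frac{1}{k!}\bigg(\prod_{j=1}^{n}\big[(k+(j-1)(r-s))_s-(n-j)\lambda\big]\bigg). \]
   Context: Notation: $(x)_0=1$, $(x)_m=x(x-1)\cdots(x-m+1)$ for $m\ge1$ (falling factorial). Let $D=\frac{d}{dx}$ and let $x$ also denote the operator of multiplication by $x$ (acting on polynomials/smooth functions). The generalized degenerate $(r,s)$-Stirling numbers of the second kind $S_\lambda^{(r,s)}(n,k)$, $0\le k\le ns$, are defined by the operator identity \[ \prod_{k=0}^{n-1}\Big(x^{r}D^{s}-k\lambda\, x^{r-s}\Big)=x^{n(r-s)}\sum_{k=0}^{ns}S_\lambda^{(r,s)}(n,k)\,x^{k}D^{k}, \] where the product of operators is written with the factors $k=0,1,\dots,n-1$ from left to right. The generalized degenerate $(r,s)$-Bell polynomials are $\phi_{n,\lambda}^{(r,s)}(x)=\sum_{k=0}^{ns}S_\lambda^{(r,s)}(n,k)x^k$, and $\phi_{n,\lambda}^{(r,s)}=\phi_{n,\lambda}^{(r,s)}(1)$. *)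

theory Defs
  imports Complex_Main "HOL-Computational_Algebra.Polynomial"
begin

definition falling_fact :: "real \<Rightarrow> nat \<Rightarrow> real" where
  "falling_fact y m = (\<Prod>i<m. (y - of_nat i))"

definition stirling_op :: "real \<Rightarrow> nat \<Rightarrow> nat \<Rightarrow> nat \<Rightarrow> real poly \<Rightarrow> real poly" where
  "stirling_op lam r s k p =
     monom 1 r * ((pderiv ^^ s) p) - smult (of_nat k * lam) (monom 1 (r - s) * p)"

text \<open>Product of operators, factors k = 0,...,n-1 written left to right
  (so the factor k = n-1 is applied first).\<close>
definition stirling_prod_op :: "real \<Rightarrow> nat \<Rightarrow> nat \<Rightarrow> nat \<Rightarrow> real poly \<Rightarrow> real poly" where
  "stirling_prod_op lam r s n = foldr (\<circ>) (map (stirling_op lam r s) [0..<n]) id"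

text \<open>Generalized degenerate (r,s)-Stirling numbers of the second kind,
  defined as the (unique) coefficients in the normal-ordering operator identity;
  set to 0 outside 0 <= k <= n s.\<close>
definition gd_stirling2 :: "real \<Rightarrow> nat \<Rightarrow> nat \<Rightarrow> nat \<Rightarrow> nat \<Rightarrow> real" where
  "gd_stirling2 lam r s n = (THE c. (\<forall>k > n * s. c k = 0) \<and>
     (\<forall>p. stirling_prod_op lam r s n p =
        monom 1 (n * (r - s)) * (\<Sum>k\<le>n * s. smult (c k) (monom 1 k * (pderiv ^^ k) p))))"

definition gd_bell :: "real \<Rightarrow> nat \<Rightarrow> nat \<Rightarrow> nat \<Rightarrow> real \<Rightarrow> real" where
  "gd_bell lam r s n x = (\<Sum>k\<le>n * s. gd_stirling2 lam r s n k * x ^ k)"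

end

theory Submission
  imports Defs
begin


definition rep :: "nat \<Rightarrow> (real \<Rightarrow> real) \<Rightarrow> bool" where
  "rep d f \<longleftrightarrow> (\<exists>c. \<forall>y. f y = (\<Sum>k\<le>d. c k * falling_fact y k))"

lemma ff_0[simp]: "falling_fact y 0 = 1" by (simp add: falling_fact_def)
lemma ff_Suc: "falling_fact y (Suc k) = falling_fact y k * (y - of_nat k)"
  by (simp add: falling_fact_def)

lemma ifm: "(if P then a else b) * (z::real) = (if P then a * z else b * z)" by simp

lemma rep_ff: "k \<le> d \<Longrightarrow> rep d (\<lambda>y. falling_fact y k)"
  unfolding rep_def
  by (rule exI[of _ "\<lambda>j. if j = k then 1 else 0"]) (simp add: ifm cong: if_cong)

lemma rep_add: "rep d f \<Longrightarrow> rep d g \<Longrightarrow> rep d (\<lambda>y. f y + g y)"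
  unfolding rep_def
proof (elim exE)
  fix c c' assume "\<forall>y. f y = (\<Sum>k\<le>d. c k * falling_fact y k)" "\<forall>y. g y = (\<Sum>k\<le>d. c' k * falling_fact y k)"
  then show "\<exists>c. \<forall>y. f y + g y = (\<Sum>k\<le>d. c k * falling_fact y k)"
    by (intro exI[of _ "\<lambda>k. c k + c' k"]) (simp add: sum.distrib distrib_right)
qed

lemma rep_scale: "rep d f \<Longrightarrow> rep d (\<lambda>y. a * f y)"
  unfolding rep_def
proof (elim exE)
  fix c assume "\<forall>y. f y = (\<Sum>k\<le>d. c k * falling_fact y k)"
  then show "\<exists>c. \<forall>y. a * f y = (\<Sum>k\<le>d. c k * falling_fact y k)"
    by (intro exI[of _ "\<lambda>k. a * c k"]) (simp add: sum_distrib_left mult.assoc)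
qed

lemma rep_zero: "rep d (\<lambda>y. 0)"
  unfolding rep_def by (intro exI[of _ "\<lambda>k. 0"]) simp

lemma rep_sum: "finite A \<Longrightarrow> (\<And>i. i \<in> A \<Longrightarrow> rep d (F i)) \<Longrightarrow> rep d (\<lambda>y. \<Sum>i\<in>A. F i y)"
  by (induction A rule: finite_induct) (auto intro: rep_add rep_zero)

lemma rep_mono: "rep d f \<Longrightarrow> d \<le> d' \<Longrightarrow> rep d' f"
  unfolding rep_def
proof (elim exE)
  fix c assume c: "\<forall>y. f y = (\<Sum>k\<le>d. c k * falling_fact y k)" and "d \<le> d'"
  show "\<exists>c. \<forall>y. f y = (\<Sum>k\<le>d'. c k * falling_fact y k)"
  proof (intro exI[of _ "\<lambda>k. if k \<le> d then c k else 0"] allI)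
    fix y
    have "(\<Sum>k\<le>d'. (if k \<le> d then c k else 0) * falling_fact y k) = (\<Sum>k\<in>{..d'} \<inter> {k. k \<le> d}. c k * falling_fact y k)"
      by (simp add: sum.inter_restrict ifm cong: if_cong)
    also have "{..d'} \<inter> {k. k \<le> d} = {..d}" using \<open>d \<le> d'\<close> by auto
    finally show "f y = (\<Sum>k\<le>d'. (if k \<le> d then c k else 0) * falling_fact y k)" using c by simp
  qed
qed

lemma rep_const: "rep d (\<lambda>y. a)"
  using rep_scale[OF rep_ff[of 0 d], of a] by simp

lemma rep_mul_y: "rep d f \<Longrightarrow> rep (Suc d) (\<lambda>y. y * f y)"
proof -
  assume "rep d f"
  then obtain c where c: "\<And>y. f y = (\<Sum>k\<le>d. c k * falling_fact y k)" unfolding rep_def by blast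
  have "\<And>y. y * f y = (\<Sum>k\<le>d. c k * falling_fact y (Suc k) + (c k * of_nat k) * falling_fact y k)"
    by (simp add: c sum_distrib_left ff_Suc algebra_simps)
  moreover have "rep (Suc d) (\<lambda>y. \<Sum>k\<le>d. c k * falling_fact y (Suc k) + (c k * of_nat k) * falling_fact y k)"
    by (intro rep_sum rep_add rep_scale rep_ff) auto
  ultimately show ?thesis by simp
qed

lemma rep_mul_lin: "rep d f \<Longrightarrow> rep (Suc d) (\<lambda>y. (y + a) * f y)"
proof -
  assume h: "rep d f"
  have "rep (Suc d) (\<lambda>y. y * f y + a * f y)"
    by (intro rep_add rep_mul_y h rep_mono[OF rep_scale[OF h]]) auto
  then show ?thesis by (simp add: distrib_right)
qed

lemma rep_ff_mult: "rep d g \<Longrightarrow> rep (k + d) (\<lambda>y. falling_fact y k * g y)"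
proof (induction k)
  case 0 then show ?case by simp
next
  case (Suc k)
  have "rep (Suc (k + d)) (\<lambda>y. (y + (- of_nat k)) * (falling_fact y k * g y))"
    by (rule rep_mul_lin[OF Suc.IH[OF Suc.prems]])
  then show ?case by (simp add: ff_Suc algebra_simps)
qed

lemma rep_mult: "rep d1 f \<Longrightarrow> rep d2 g \<Longrightarrow> rep (d1 + d2) (\<lambda>y. f y * g y)"
proof -
  assume "rep d1 f" and g: "rep d2 g"
  then obtain c where c: "\<And>y. f y = (\<Sum>k\<le>d1. c k * falling_fact y k)" unfolding rep_def by blast
  have "rep (d1 + d2) (\<lambda>y. \<Sum>k\<le>d1. c k * (falling_fact y k * g y))"
    by (intro rep_sum rep_scale rep_mono[OF rep_ff_mult[OF g]]) auto
  then show ?thesis by (simp add: c sum_distrib_right mult.assoc)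
qed

lemma rep_ff_shift: "rep k (\<lambda>y. falling_fact (y + a) k)"
proof (induction k)
  case 0 then show ?case using rep_const by simp
next
  case (Suc k)
  have "rep (Suc k) (\<lambda>y. (y + (a - of_nat k)) * falling_fact (y + a) k)"
    by (rule rep_mul_lin[OF Suc.IH])
  then show ?case by (simp add: ff_Suc algebra_simps)
qed

lemma rep_prod: "finite A \<Longrightarrow> (\<And>j. j \<in> A \<Longrightarrow> rep s (F j)) \<Longrightarrow> rep (card A * s) (\<lambda>y. \<Prod>j\<in>A. F j y)"
proof (induction A rule: finite_induct)
  case empty then show ?case using rep_const by simp
next
  case (insert x A)
  have "rep (s + card A * s) (\<lambda>y. F x y * (\<Prod>j\<in>A. F j y))"
    using insert by (intro rep_mult) auto
  then show ?case using insert by simp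
qed


lemma ff_nat_zero: "m < k \<Longrightarrow> falling_fact (of_nat m) k = 0"
  unfolding falling_fact_def by (rule prod_zero) auto

lemma pderiv_funpow_monom:
  "(pderiv ^^ k) (monom a m) = monom (a * falling_fact (of_nat m) k) (m - k)"
proof (induction k)
  case 0 then show ?case by simp
next
  case (Suc k)
  show ?case
  proof (cases "k < m")
    case True
    then have "of_nat (m - k) = (of_nat m - of_nat k :: real)" by simp
    then show ?thesis using Suc by (simp add: pderiv_monom ff_Suc algebra_simps diff_Suc)
  next
    case False
    then show ?thesis using Suc
      by (cases "k = m") (simp_all add: pderiv_monom ff_Suc ff_nat_zero)
  qed
qed

lemma monom_pd: "monom 1 k * (pderiv ^^ k) (monom a m) = monom (a * falling_fact (of_nat m) k) m"
  by (cases "k \<le> m") (simp_all add: pderiv_funpow_monom mult_monom ff_nat_zero)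

lemma stirling_op_monom: "s \<le> r \<Longrightarrow>
  stirling_op lam r s i (monom a m) = monom (a * (falling_fact (of_nat m) s - of_nat i * lam)) (m + (r - s))"
  unfolding stirling_op_def
  by (cases "s \<le> m") (simp_all add: pderiv_funpow_monom mult_monom ff_nat_zero smult_monom
      diff_monom minus_monom algebra_simps)

lemma foldr_comp: "foldr (\<circ>) fs g = foldr (\<circ>) fs id \<circ> g"
  by (induction fs) auto

lemma prod_op_Suc: "stirling_prod_op lam r s (Suc n) p = stirling_prod_op lam r s n (stirling_op lam r s n p)"
  unfolding stirling_prod_op_def by (simp add: foldr_comp[of _ "stirling_op lam r s n"])

definition Gf :: "real \<Rightarrow> nat \<Rightarrow> nat \<Rightarrow> nat \<Rightarrow> real \<Rightarrow> real" where
  "Gf lam r s n y = (\<Prod>j<n. falling_fact (y + of_nat j * of_nat (r - s)) s - of_nat (n - Suc j) * lam)"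

lemma Gf_Suc: "Gf lam r s (Suc n) y = (falling_fact y s - of_nat n * lam) * Gf lam r s n (y + of_nat (r - s))"
  unfolding Gf_def by (subst prod.lessThan_Suc_shift) (simp add: algebra_simps)

lemma prod_op_monom: "s \<le> r \<Longrightarrow>
  stirling_prod_op lam r s n (monom a m) = monom (a * Gf lam r s n (of_nat m)) (m + n * (r - s))"
proof (induction n arbitrary: a m)
  case 0 then show ?case by (simp add: stirling_prod_op_def Gf_def)
next
  case (Suc n)
  have e: "m + (r - s) + n * (r - s) = m + Suc n * (r - s)" by simp
  have f: "real (m + (r - s)) = real m + real (r - s)" by simp
  show ?case using Suc by (simp only: prod_op_Suc stirling_op_monom Gf_Suc e f mult.assoc)
qed

lemma rep_Gf: "rep (n * s) (Gf lam r s n)"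
proof -
  have "rep (card {..<n} * s) (\<lambda>y. \<Prod>j<n. falling_fact (y + of_nat j * of_nat (r - s)) s + (- (of_nat (n - Suc j) * lam)))"
    by (intro rep_prod rep_add rep_ff_shift rep_const) auto
  then show ?thesis unfolding Gf_def by (simp add: fun_eq_iff)
qed

lemma funpow_pderiv_add: "(pderiv ^^ k) (p + q) = (pderiv ^^ k) p + (pderiv ^^ k) q"
  by (induction k) (simp_all add: pderiv_add)

lemma funpow_pderiv_0: "(pderiv ^^ k) 0 = 0"
  by (induction k) simp_all

lemma stirling_op_add: "stirling_op lam r s i (p + q) = stirling_op lam r s i p + stirling_op lam r s i q"
  unfolding stirling_op_def by (simp add: funpow_pderiv_add algebra_simps smult_add_right)

lemma stirling_op_0: "stirling_op lam r s i 0 = 0"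
  unfolding stirling_op_def by (simp add: funpow_pderiv_0)

lemma prod_op_add: "stirling_prod_op lam r s n (p + q) = stirling_prod_op lam r s n p + stirling_prod_op lam r s n q"
  by (induction n arbitrary: p q) (simp_all add: prod_op_Suc stirling_op_add stirling_prod_op_def[of _ _ _ 0])

lemma prod_op_0: "stirling_prod_op lam r s n 0 = 0"
  by (induction n) (simp_all add: prod_op_Suc stirling_op_0 stirling_prod_op_def[of _ _ _ 0])

definition L2 :: "nat \<Rightarrow> nat \<Rightarrow> (nat \<Rightarrow> real) \<Rightarrow> real poly \<Rightarrow> real poly" where
  "L2 e N c p = monom 1 e * (\<Sum>k\<le>N. smult (c k) (monom 1 k * (pderiv ^^ k) p))"

lemma L2_add: "L2 e N c (p + q) = L2 e N c p + L2 e N c q"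
  unfolding L2_def by (simp add: funpow_pderiv_add algebra_simps smult_add_right sum.distrib)

lemma L2_0: "L2 e N c 0 = 0"
  unfolding L2_def by (simp add: funpow_pderiv_0)

lemma L2_monom: "L2 e N c (monom a m) = monom (a * (\<Sum>k\<le>N. c k * falling_fact (of_nat m) k)) (m + e)"
  unfolding L2_def by (simp add: monom_pd smult_monom mult_monom monom_sum[symmetric] sum_distrib_left algebra_simps)

lemma extend_monoms:
  assumes "\<And>a m. F (monom a m) = H (monom a m)"
    and "\<And>p q. F (p + q) = F p + F q" "F 0 = 0"
    and "\<And>p q. H (p + q) = H p + H q" "H 0 = 0"
  shows "F p = (H p :: real poly)"
proof -
  have "F p = F (\<Sum>i\<le>degree p. monom (coeff p i) i)" by (simp add: poly_as_sum_of_monoms)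
  also have "\<dots> = (\<Sum>i\<le>degree p. F (monom (coeff p i) i))"
    using sum_comp_morphism[of F, OF assms(3) assms(2), of "\<lambda>i. monom (coeff p i) i" "{..degree p}"]
    unfolding o_def by simp
  also have "\<dots> = (\<Sum>i\<le>degree p. H (monom (coeff p i) i))" using assms(1) by simp
  also have "\<dots> = H (\<Sum>i\<le>degree p. monom (coeff p i) i)"
    using sum_comp_morphism[of H, OF assms(5) assms(4), of "\<lambda>i. monom (coeff p i) i" "{..degree p}"]
    unfolding o_def by simp
  finally show ?thesis by (simp add: poly_as_sum_of_monoms)
qed


lemma uniq_coeffs:
  assumes "\<forall>k>N. e k = 0" and "\<And>m::nat. (\<Sum>k\<le>N. e k * falling_fact (of_nat m) k) = 0"
  shows "e m = 0"
proof (induction m rule: less_induct)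
  case (less m)
  have ffm: "falling_fact (of_nat m) m = fact m"
    unfolding falling_fact_def fact_prod_rev by (simp add: of_nat_diff lessThan_atLeast0)
  have "(\<Sum>k\<le>N. e k * falling_fact (of_nat m) k) = (\<Sum>k\<le>N. if k = m then e m * fact m else 0)"
  proof (rule sum.cong)
    fix k assume "k \<in> {..N}"
    show "e k * falling_fact (of_nat m) k = (if k = m then e m * fact m else 0)"
      using less[of k] ff_nat_zero[of m k] ffm by (cases k m rule: linorder_cases) auto
  qed simp
  then have "(if m \<le> N then e m * fact m else 0) = 0" using assms(2)[of m] by simp
  then show ?case using assms(1) by (auto split: if_splits)
qed

lemma ff_shift_fact: "falling_fact (of_nat (i + k)) k = fact (i + k) / fact i"
proof (induction k)
  case 0 then show ?case by simp
next
  case (Suc k)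
  have "falling_fact (of_nat (i + Suc k)) (Suc k) = of_nat (i + Suc k) * falling_fact (of_nat (i + k)) k"
    unfolding falling_fact_def by (subst prod.lessThan_Suc_shift) simp
  then show ?case using Suc by simp
qed

lemma ff_series: "(\<lambda>m. falling_fact (of_nat m) k / fact m * x ^ m) sums (x ^ k * exp x)"
proof -
  have h: "\<And>i. falling_fact (real i + real k) k * fact i = fact (i + k)"
    using ff_shift_fact by simp
  have "(\<lambda>i. x ^ k * (x ^ i /\<^sub>R fact i)) sums (x ^ k * exp x)"
    by (rule sums_mult[OF exp_converges])
  moreover have "\<And>i. x ^ k * (x ^ i /\<^sub>R fact i) = falling_fact (of_nat (i + k)) k / fact (i + k) * x ^ (i + k)"
    using h by (simp add: add.commute power_add divide_simps)
  ultimately have "(\<lambda>i. falling_fact (of_nat (i + k)) k / fact (i + k) * x ^ (i + k)) sums (x ^ k * exp x)"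
    by (simp only:)
  then have "(\<lambda>m. falling_fact (of_nat m) k / fact m * x ^ m) sums (x ^ k * exp x + (\<Sum>i<k. falling_fact (of_nat i) k / fact i * x ^ i))"
    by (rule sums_iff_shift[THEN iffD1])
  moreover have "(\<Sum>i<k. falling_fact (of_nat i) k / fact i * x ^ i) = 0"
    by (rule sum.neutral) (simp add: ff_nat_zero)
  ultimately show ?thesis by simp
qed


lemma stmt_prod: "(\<Prod>j=1..n. falling_fact (of_nat k + of_nat (j - 1) * of_nat (r - s)) s - of_nat (n - j) * lam)
   = Gf lam r s n (of_nat k)"
proof -
  have "{1..n} = Suc ` {..<n}" by (simp add: image_Suc_lessThan)
  then show ?thesis unfolding Gf_def by (simp add: prod.reindex)
qed

lemma stirling_char:
  assumes rs: "s \<le> r"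
  shows "\<exists>c. gd_stirling2 lam r s n = c \<and> (\<forall>y. Gf lam r s n y = (\<Sum>k\<le>n * s. c k * falling_fact y k))"
proof -
  define N where "N = n * s"
  obtain c0 where c0: "\<And>y. Gf lam r s n y = (\<Sum>k\<le>N. c0 k * falling_fact y k)"
    using rep_Gf[of n s lam r] unfolding rep_def N_def by blast
  define c where "c k = (if k \<le> N then c0 k else 0)" for k
  have cG: "Gf lam r s n y = (\<Sum>k\<le>N. c k * falling_fact y k)" for y
    unfolding c0 c_def by simp
  let ?P = "\<lambda>c. (\<forall>k > n * s. c k = 0) \<and>
     (\<forall>p. stirling_prod_op lam r s n p =
        monom 1 (n * (r - s)) * (\<Sum>k\<le>n * s. smult (c k) (monom 1 k * (pderiv ^^ k) p)))"
  have PL: "?P c' \<longleftrightarrow> (\<forall>k > N. c' k = 0) \<and> (\<forall>p. stirling_prod_op lam r s n p = L2 (n * (r - s)) N c' p)" for c'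
    unfolding L2_def N_def by simp
  have Pc: "?P c"
    unfolding PL
  proof (rule conjI)
    show "\<forall>k>N. c k = 0" by (simp add: c_def)
    show "\<forall>p. stirling_prod_op lam r s n p = L2 (n * (r - s)) N c p"
    proof
      fix p
      show "stirling_prod_op lam r s n p = L2 (n * (r - s)) N c p"
        by (rule extend_monoms) (simp_all add: prod_op_monom[OF rs] L2_monom cG[symmetric]
            prod_op_add prod_op_0 L2_add L2_0)
    qed
  qed
  have uniq: "c' = c" if "?P c'" for c'
  proof
    fix m
    have z1: "\<forall>k>N. c' k = 0" and e1: "\<And>p. stirling_prod_op lam r s n p = L2 (n * (r - s)) N c' p"
      using that unfolding PL by auto
    have z2: "\<forall>k>N. c k = 0" and e2: "\<And>p. stirling_prod_op lam r s n p = L2 (n * (r - s)) N c p"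
      using Pc unfolding PL by auto
    have "(\<Sum>k\<le>N. (c' k - c k) * falling_fact (of_nat j) k) = 0" for j :: nat
    proof -
      have "L2 (n * (r - s)) N c' (monom 1 j) = L2 (n * (r - s)) N c (monom 1 j)"
        using e1 e2 by metis
      then have "(\<Sum>k\<le>N. c' k * falling_fact (of_nat j) k) = (\<Sum>k\<le>N. c k * falling_fact (of_nat j) k)"
        by (simp add: L2_monom)
      then show ?thesis by (simp add: algebra_simps sum_subtractf)
    qed
    then have "c' m - c m = 0"
      by (intro uniq_coeffs[of N "\<lambda>k. c' k - c k"]) (use z1 z2 in auto)
    then show "c' m = c m" by simp
  qed
  have "gd_stirling2 lam r s n = c"
  proof -
    have ex1: "\<exists>!c'. ?P c'" by (rule ex1I[of _ c]) (rule Pc, erule uniq)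
    show ?thesis unfolding gd_stirling2_def by (rule the1_equality[OF ex1]) (rule Pc)
  qed
  then show ?thesis using cG unfolding N_def by blast
qed

lemma main_eq:
  fixes lam x :: real and r s n :: nat
  assumes "s \<le> r"
  shows "gd_bell lam r s n x = (1 / exp x) *
           (\<Sum>k. (1 / fact k) * (\<Prod>j=1..n. falling_fact (of_nat k + of_nat (j - 1) * of_nat (r - s)) s
                                   - of_nat (n - j) * lam) * x ^ k)"
proof -
  obtain c where gc: "gd_stirling2 lam r s n = c" and cG: "\<And>y. Gf lam r s n y = (\<Sum>k\<le>n * s. c k * falling_fact y k)"
    using stirling_char[OF assms] by blast
  have trm: "(1 / fact m) * (\<Prod>j=1..n. falling_fact (of_nat m + of_nat (j - 1) * of_nat (r - s)) s
                                   - of_nat (n - j) * lam) * x ^ m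
     = (\<Sum>k\<le>n * s. c k * (falling_fact (of_nat m) k / fact m * x ^ m))" for m :: nat
    unfolding stmt_prod cG by (simp add: sum_distrib_left sum_distrib_right algebra_simps)
  have "(\<lambda>m. \<Sum>k\<le>n * s. c k * (falling_fact (of_nat m) k / fact m * x ^ m)) sums (\<Sum>k\<le>n * s. c k * (x ^ k * exp x))"
    by (intro sums_sum sums_mult ff_series)
  then have "(\<Sum>m. (1 / fact m) * (\<Prod>j=1..n. falling_fact (of_nat m + of_nat (j - 1) * of_nat (r - s)) s
                                   - of_nat (n - j) * lam) * x ^ m) = (\<Sum>k\<le>n * s. c k * (x ^ k * exp x))"
    unfolding trm by (rule sums_unique[symmetric])
  then show ?thesis
    by (simp add: gd_bell_def gc sum_distrib_left sum_distrib_right algebra_simps)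
qed

theorem theorem1:
  fixes lam x :: real and r s n :: nat
  assumes "r \<ge> s" and "s \<ge> 1" and "n \<ge> 1"
  shows "gd_bell lam r s n x = (1 / exp x) *
           (\<Sum>k. (1 / fact k) * (\<Prod>j=1..n. falling_fact (of_nat k + of_nat (j - 1) * of_nat (r - s)) s
                                   - of_nat (n - j) * lam) * x ^ k)
       \<and> gd_bell lam r s n 1 = (1 / exp 1) *
           (\<Sum>k. (1 / fact k) * (\<Prod>j=1..n. falling_fact (of_nat k + of_nat (j - 1) * of_nat (r - s)) s
                                   - of_nat (n - j) * lam))"
  using main_eq[OF assms(1), of lam n x] main_eq[OF assms(1), of lam n 1] by simp

end
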